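(* Let $\mathcal{P}$ satisfy properties (a)–(f) and let $(P(n,t))_{t=0}^{N}$ be the $\mathcal{P}$-constrained random graph process. Let $t_1=t_1(n),t_2=t_2(n)\in[N]$ and $\alpha=\alpha(n)>0$ be such that $\alpha\,(t_2-t_1)\to\infty$ and $t_2=o(\alpha n^2)$. (1) If whp $R(t_2)-R(t_1)\le \alpha(t_2-t_1)$, then whp $\mathrm{forb}(P(n,t_1))\le (1+o(1))\,\alpha N$. (2) If whp $R(t_2)-R(t_1)\ge \alpha(t_2-t_1)$, then whp $\mathrm{forb}(P(n,t_2))\ge (1+o(1))\,\alpha N$.
   Context: All graphs are vertex-labelled, simple and undirected. Let $\mathcal{P}$ be a class of graphs such that: (a) $\mathcal{P}$ is not the class of all graphs; (b) it contains all edgeless graphs; (c) it is closed under isomorphism; (d) it is closed under taking minors; (e) it is weakly addable, i.e. if $G\in\mathcal{P}$ and $u,v$ lie in different components of $G$ then $G+uv\in\mathcal{P}$; (f) if $G\in\mathcal{P}$ and $u,v$ are non-adjacent vertices in the same component of $G$ which is a tree, then $G+uv\in\mathcal{P}$. Let $N=\binom{n}{2}$. The $\mathcal{P}$-constrained random graph process: take a uniformly random ordering $e_1,\ldots,e_N$ of the edges of $K_n$; $P(n,0)$ is the empty graph on $[n]$; for $t\in[N]$, set $P(n,t)=P(n,t-1)+e_t$ if $P(n,t-1)+e_t\in\mathcal{P}$ ($e_t$ accepted), and $P(n,t)=P(n,t-1)$ otherwise ($e_t$ rejected). $R(t):=t-e(P(n,t))$ is the number of rejected edges up to step $t$. For $H\in\mathcal{P}$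 on vertex set $[n]$, an edge $e\in E(K_n)\setminus E(H)$ is forbidden in $H$ if $H+e\notin\mathcal{P}$; $\mathrm{forb}(H)$ is the number of such edges. "whp" means with probability tending to $1$ as $n\to\infty$. *)

theory Defs
  imports "HOL-Probability.Probability" "HOL-Combinatorics.Multiset_Permutations"
begin

type_synonym graph = "nat set \<times> nat set set"

definition verts :: "graph \<Rightarrow> nat set" where "verts G = fst G"
definition edges :: "graph \<Rightarrow> nat set set" where "edges G = snd G"

definition is_graph :: "graph \<Rightarrow> bool" where
  "is_graph G \<longleftrightarrow> finite (verts G) \<and>
     (\<forall>e\<in>edges G. \<exists>u v. e = {u, v} \<and> u \<noteq> v \<and> u \<in> verts G \<and> v \<in> verts G)"

definition add_edge :: "graph \<Rightarrow> nat \<Rightarrow> nat \<Rightarrow> graph" where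
  "add_edge G u v = (verts G, insert {u, v} (edges G))"

definition adj :: "graph \<Rightarrow> nat \<Rightarrow> nat \<Rightarrow> bool" where
  "adj G u v \<longleftrightarrow> {u, v} \<in> edges G"

definition reach :: "graph \<Rightarrow> nat \<Rightarrow> nat \<Rightarrow> bool" where
  "reach G u v \<longleftrightarrow> u \<in> verts G \<and> v \<in> verts G \<and> (adj G)\<^sup>*\<^sup>* u v"

definition component :: "graph \<Rightarrow> nat \<Rightarrow> nat set" where
  "component G u = {w. reach G u w}"

definition induced :: "graph \<Rightarrow> nat set \<Rightarrow> graph" where
  "induced G S = (verts G \<inter> S, {e \<in> edges G. e \<subseteq> S})"

definition connected_graph :: "graph \<Rightarrow> bool" where
  "connected_graph G \<longleftrightarrow> verts G \<noteq> {} \<and> (\<forall>u\<in>verts G. \<forall>v\<in>verts G. reach G u v)"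

definition is_cycle :: "graph \<Rightarrow> nat list \<Rightarrow> bool" where
  "is_cycle G cs \<longleftrightarrow> length cs \<ge> 3 \<and> distinct cs \<and> set cs \<subseteq> verts G \<and>
     (\<forall>i. Suc i < length cs \<longrightarrow> adj G (cs ! i) (cs ! Suc i)) \<and> adj G (last cs) (hd cs)"

definition is_tree :: "graph \<Rightarrow> bool" where
  "is_tree G \<longleftrightarrow> connected_graph G \<and> (\<nexists>cs. is_cycle G cs)"

definition minor :: "graph \<Rightarrow> graph \<Rightarrow> bool" where
  "minor H G \<longleftrightarrow> (\<exists>\<phi> :: nat \<Rightarrow> nat set.
     (\<forall>x\<in>verts H. \<phi> x \<subseteq> verts G \<and> connected_graph (induced G (\<phi> x))) \<and>
     (\<forall>x\<in>verts H. \<forall>y\<in>verts H. x \<noteq> y \<longrightarrow> \<phi> x \<inter> \<phi> y = {}) \<and>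
     (\<forall>x y. {x, y} \<in> edges H \<longrightarrow> (\<exists>u\<in>\<phi> x. \<exists>v\<in>\<phi> y. {u, v} \<in> edges G)))"

definition isomorphic :: "graph \<Rightarrow> graph \<Rightarrow> bool" where
  "isomorphic G H \<longleftrightarrow> (\<exists>f. bij_betw f (verts G) (verts H) \<and> edges H = (\<lambda>e. f ` e) ` edges G)"

definition admissible_class :: "graph set \<Rightarrow> bool" where
  "admissible_class P \<longleftrightarrow>
     (\<forall>G\<in>P. is_graph G) \<and>
     (\<exists>G. is_graph G \<and> G \<notin> P) \<and>                                         \<comment> \<open>(a)\<close>
     (\<forall>V. finite V \<longrightarrow> (V, {}) \<in> P) \<and>                                     \<comment> \<open>(b)\<close>
     (\<forall>G H. G \<in> P \<and> is_graph H \<and> isomorphic G H \<longrightarrow> H \<in> P) \<and>               \<comment> \<open>(c)\<close>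
     (\<forall>G H. G \<in> P \<and> is_graph H \<and> minor H G \<longrightarrow> H \<in> P) \<and>                    \<comment> \<open>(d)\<close>
     (\<forall>G u v. G \<in> P \<and> u \<in> verts G \<and> v \<in> verts G \<and> \<not> reach G u v
         \<longrightarrow> add_edge G u v \<in> P) \<and>                                          \<comment> \<open>(e)\<close>
     (\<forall>G u v. G \<in> P \<and> u \<in> verts G \<and> v \<in> verts G \<and> u \<noteq> v \<and> \<not> adj G u v \<and>
         reach G u v \<and> is_tree (induced G (component G u))
         \<longrightarrow> add_edge G u v \<in> P)                                            \<comment> \<open>(f)\<close>"

definition Kn_edges :: "nat \<Rightarrow> nat set set" where
  "Kn_edges n = {{u, v} | u v. u \<in> {1..n} \<and> v \<in> {1..n} \<and> u \<noteq> v}"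

definition ordering_pmf :: "nat \<Rightarrow> nat set list pmf" where
  "ordering_pmf n = pmf_of_set (permutations_of_set (Kn_edges n))"

definition proc_step :: "graph set \<Rightarrow> nat set \<Rightarrow> graph \<Rightarrow> graph" where
  "proc_step P e G = (if (verts G, insert e (edges G)) \<in> P then (verts G, insert e (edges G)) else G)"

definition proc :: "graph set \<Rightarrow> nat \<Rightarrow> nat set list \<Rightarrow> nat \<Rightarrow> graph" where
  "proc P n xs t = fold (proc_step P) (take t xs) ({1..n}, {})"

definition rej :: "graph set \<Rightarrow> nat \<Rightarrow> nat set list \<Rightarrow> nat \<Rightarrow> nat" where
  "rej P n xs t = t - card (edges (proc P n xs t))"

definition forb :: "graph set \<Rightarrow> nat \<Rightarrow> graph \<Rightarrow> nat" where
  "forb P n H = card {e \<in> Kn_edges n - edges H. (verts H, insert e (edges H)) \<notin> P}"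

definition whp :: "(nat \<Rightarrow> nat set list \<Rightarrow> bool) \<Rightarrow> bool" where
  "whp Q \<longleftrightarrow> (\<lambda>n. measure_pmf.prob (ordering_pmf n) {xs. Q n xs}) \<longlonglongrightarrow> 1"

end

theory Submission
  imports Defs "HOL-Real_Asymp.Real_Asymp"
begin


definition avg :: "'a set \<Rightarrow> ('a list \<Rightarrow> real) \<Rightarrow> real" where
  "avg A f = (\<Sum>xs\<in>permutations_of_set A. f xs) / card (permutations_of_set A)"

lemma avg_cons:
  assumes "finite A" "A \<noteq> {}"
  shows "avg A f = (\<Sum>x\<in>A. avg (A - {x}) (\<lambda>ys. f (x # ys))) / card A"
proof -
  have disj: "\<forall>x\<in>A. \<forall>y\<in>A. x \<noteq> y \<longrightarrow> ((#) x ` permutations_of_set (A - {x})) \<inter> ((#) y ` permutations_of_set (A - {y})) = {}"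
    by auto
  have "(\<Sum>xs\<in>permutations_of_set A. f xs) = (\<Sum>x\<in>A. \<Sum>xs\<in>(#) x ` permutations_of_set (A - {x}). f xs)"
    unfolding permutations_of_set_nonempty[OF assms(2)]
    by (rule sum.UNION_disjoint) (use assms disj in auto)
  also have "\<dots> = (\<Sum>x\<in>A. \<Sum>ys\<in>permutations_of_set (A - {x}). f (x # ys))"
    by (rule sum.cong[OF refl]) (simp add: sum.reindex inj_on_def)
  finally have S: "(\<Sum>xs\<in>permutations_of_set A. f xs) = (\<Sum>x\<in>A. \<Sum>ys\<in>permutations_of_set (A - {x}). f (x # ys))" .
  obtain m where m: "card A = Suc m" using assms by (cases "card A") auto
  have c1: "card (permutations_of_set A) = Suc m * fact m" using assms m by simp
  have c2: "\<And>x. x \<in> A \<Longrightarrow> card (permutations_of_set (A - {x})) = fact m" using assms m by simp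
  have "avg A f = (\<Sum>x\<in>A. (\<Sum>ys\<in>permutations_of_set (A - {x}). f (x # ys)) / fact m) / Suc m"
    unfolding avg_def S c1 by (simp add: sum_divide_distrib[symmetric] field_simps)
  also have "\<dots> = (\<Sum>x\<in>A. avg (A - {x}) (\<lambda>ys. f (x # ys))) / card A"
    unfolding m avg_def by (intro arg_cong2[where f="(/)"] sum.cong refl) (simp add: c2)
  finally show ?thesis .
qed

lemma avg_mono:
  assumes "\<And>xs. xs \<in> permutations_of_set A \<Longrightarrow> f xs \<le> g xs"
  shows "avg A f \<le> avg A g"
  unfolding avg_def by (intro divide_right_mono sum_mono assms) auto

lemma avg_const: "finite A \<Longrightarrow> avg A (\<lambda>_. c) = c"
  unfolding avg_def by simp

lemma avg_bound_cons:
  assumes "finite A" "A \<noteq> {}" "\<And>x. x \<in> A \<Longrightarrow> avg (A - {x}) (\<lambda>ys. f (x # ys)) \<le> b"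
  shows "avg A f \<le> b"
proof -
  have "(\<Sum>x\<in>A. avg (A - {x}) (\<lambda>ys. f (x # ys))) \<le> (\<Sum>x\<in>A. b)" by (rule sum_mono) (rule assms(3))
  then show ?thesis using assms(1,2) by (simp add: avg_cons field_simps card_gt_0_iff)
qed

lemma prob_avg:
  assumes "finite A"
  shows "measure_pmf.prob (pmf_of_set (permutations_of_set A)) {xs. Q xs} = avg A (\<lambda>xs. if Q xs then 1 else 0)"
  using assms unfolding avg_def
  by (subst measure_pmf_of_set) (auto simp: sum.If_cases Int_def)



definition fb :: "graph set \<Rightarrow> graph \<Rightarrow> nat set \<Rightarrow> bool" where
  "fb P G e \<longleftrightarrow> (verts G, insert e (edges G)) \<notin> P"

definition ginv :: "graph set \<Rightarrow> nat \<Rightarrow> graph \<Rightarrow> bool" where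
  "ginv P n G \<longleftrightarrow> G \<in> P \<and> verts G = {1..n}"

lemma adm_graph_all: assumes "admissible_class P" shows "(\<forall>G\<in>P. is_graph G)"
  using assms[unfolded admissible_class_def] by (elim conjE)
lemma adm_minor_all: assumes "admissible_class P" shows "(\<forall>G H. G \<in> P \<and> is_graph H \<and> minor H G \<longrightarrow> H \<in> P)"
  using assms[unfolded admissible_class_def] by (elim conjE)
lemma adm_graph: "admissible_class P \<Longrightarrow> G \<in> P \<Longrightarrow> is_graph G"
  using adm_graph_all by blast
lemma adm_minor: "admissible_class P \<Longrightarrow> G \<in> P \<Longrightarrow> is_graph H \<Longrightarrow> minor H G \<Longrightarrow> H \<in> P"
  using adm_minor_all by blast

lemma subgraph_minor:
  assumes "verts H = verts G" "edges H \<subseteq> edges G"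
  shows "minor H G"
  unfolding minor_def
proof (intro exI[of _ "\<lambda>x. {x}"] conjI ballI allI impI)
  fix x assume x: "x \<in> verts H"
  show "{x} \<subseteq> verts G" using x assms by auto
  show "connected_graph (induced G {x})"
    unfolding connected_graph_def induced_def reach_def using x assms by (auto simp: verts_def edges_def)
next
  fix x y assume "x \<in> verts H" "y \<in> verts H" "x \<noteq> y" then show "{x} \<inter> {y} = {}" by auto
next
  fix x y assume "{x, y} \<in> edges H" then show "\<exists>u\<in>{x}. \<exists>v\<in>{y}. {u, v} \<in> edges G" using assms by auto
qed

lemma Kn_edge_graph:
  assumes "is_graph G" "verts G = {1..n}" "e \<in> Kn_edges n"
  shows "is_graph (verts G, insert e (edges G))"
proof -
  obtain u v where e: "e = {u, v}" "u \<noteq> v" "u \<in> {1..n}" "v \<in> {1..n}"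
    using assms(3) unfolding Kn_edges_def by blast
  show ?thesis using assms(1,2) e unfolding is_graph_def verts_def edges_def by fastforce
qed

lemma fb_mono:
  assumes adm: "admissible_class P" and g: "ginv P n G" and x: "x \<in> Kn_edges n" "\<not> fb P G x"
    and e: "e \<in> Kn_edges n" "fb P G e"
  shows "fb P (verts G, insert x (edges G)) e"
proof (rule ccontr)
  assume H: "\<not> fb P (verts G, insert x (edges G)) e"
  let ?G' = "(verts G, insert e (insert x (edges G)))"
  have "?G' \<in> P" using H unfolding fb_def by (simp add: verts_def edges_def)
  moreover have "is_graph (verts G, insert e (edges G))"
    using Kn_edge_graph[OF adm_graph[OF adm] _ e(1)] g unfolding ginv_def by auto
  moreover have "minor (verts G, insert e (edges G)) ?G'"
    by (rule subgraph_minor) (auto simp: verts_def edges_def)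
  ultimately have "(verts G, insert e (edges G)) \<in> P" using adm_minor[OF adm] by blast
  then show False using e(2) unfolding fb_def by simp
qed

lemma proc_step_fb: "proc_step P e G = (if fb P G e then G else (verts G, insert e (edges G)))"
  unfolding proc_step_def fb_def by simp

lemma ginv_step: "ginv P n G \<Longrightarrow> ginv P n (proc_step P e G)"
  unfolding ginv_def proc_step_def by (auto simp: verts_def)

lemma ginv_fold: "ginv P n G \<Longrightarrow> ginv P n (fold (proc_step P) ys G)"
  by (induction ys arbitrary: G) (auto simp: ginv_step)

lemma fb_in_edges: "G \<in> P \<Longrightarrow> e \<in> edges G \<Longrightarrow> \<not> fb P G e"
  unfolding fb_def by (cases G) (simp add: verts_def edges_def insert_absorb)

fun rc :: "graph set \<Rightarrow> graph \<Rightarrow> nat set list \<Rightarrow> nat" where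
  "rc P G [] = 0"
| "rc P G (x # xs) = (if fb P G x then 1 else 0) + rc P (proc_step P x G) xs"

lemma rc_append: "rc P G (a @ b) = rc P G a + rc P (fold (proc_step P) a G) b"
  by (induction a arbitrary: G) auto

lemma card_rc:
  assumes "distinct ys" "set ys \<inter> edges G = {}" "finite (edges G)"
  shows "card (edges (fold (proc_step P) ys G)) + rc P G ys = card (edges G) + length ys"
  using assms
proof (induction ys arbitrary: G)
  case Nil then show ?case by simp
next
  case (Cons x ys)
  show ?case
  proof (cases "fb P G x")
    case True
    then show ?thesis using Cons.IH[of G] Cons.prems by (simp add: proc_step_fb)
  next
    case False
    let ?G' = "(verts G, insert x (edges G))"
    have "card (edges (fold (proc_step P) ys ?G')) + rc P ?G' ys = card (edges ?G') + length ys"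
      by (rule Cons.IH) (use Cons.prems in \<open>auto simp: edges_def\<close>)
    moreover have "card (edges ?G') = Suc (card (edges G))" using Cons.prems by (simp add: edges_def)
    moreover have "proc_step P x G = ?G'" using False by (simp add: proc_step_fb)
    ultimately show ?thesis using False by simp
  qed
qed

lemma rej_rc:
  assumes "xs \<in> permutations_of_set (Kn_edges n)" "t \<le> length xs"
  shows "rej P n xs t = rc P ({1..n}, {}) (take t xs)"
proof -
  have "distinct (take t xs)" using assms by (simp add: permutations_of_set_def)
  from card_rc[OF this, of "({1..n}, {})" P]
  have "card (edges (proc P n xs t)) + rc P ({1..n}, {}) (take t xs) = length (take t xs)"
    unfolding proc_def by (simp add: edges_def)
  moreover have "length (take t xs) = t" using assms(2) by simp
  ultimately have "card (edges (proc P n xs t)) + rc P ({1..n}, {}) (take t xs) = t" by simp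
  then show ?thesis unfolding rej_def by simp
qed



definition FF :: "graph set \<Rightarrow> graph \<Rightarrow> nat set set \<Rightarrow> nat set set" where
  "FF P G A = {e\<in>A. fb P G e}"

lemma finite_Kn: "finite (Kn_edges n)"
proof -
  have "Kn_edges n \<subseteq> Pow {1..n}" unfolding Kn_edges_def by auto
  then show ?thesis by (rule finite_subset) simp
qed

lemma avg_scale: "avg A (\<lambda>xs. c * g xs) = c * avg A g"
  unfolding avg_def by (simp add: sum_distrib_left)

lemma sum_weights:
  assumes "finite A" "B \<subseteq> A"
  shows "(\<Sum>x\<in>A. if x \<in> B then r else (1::real)) = r * card B + (card A - card B)"
proof -
  have "(\<Sum>x\<in>A. if x \<in> B then r else (1::real)) = (\<Sum>x\<in>B. r) + (\<Sum>x\<in>A - B. 1)"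
    using assms by (simp add: sum.If_cases Int_absorb1 Diff_eq)
  also have "\<dots> = r * card B + (card A - card B)"
    using assms by (simp add: card_Diff_subset finite_subset of_nat_diff card_mono)
  finally show ?thesis .
qed

lemma part1_core:
  fixes l q :: real
  assumes adm: "admissible_class P" and lam: "l \<ge> 0" and q: "q \<ge> 0"
  shows "ginv P n G \<Longrightarrow> A \<subseteq> Kn_edges n \<Longrightarrow> k \<le> card A \<Longrightarrow> q * card A + k \<le> card (FF P G A) \<Longrightarrow>
     avg A (\<lambda>xs. exp (- l * rc P G (take k xs))) \<le> exp (- q * (1 - exp (- l))) ^ k"
proof (induction k arbitrary: G A)
  case 0
  have "finite A" using 0 finite_Kn finite_subset by blast
  then show ?case by (simp add: avg_const)
next
  case (Suc k)
  define r where "r = exp (- l)"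
  define c where "c = exp (- q * (1 - r))"
  have fin: "finite A" using Suc finite_Kn finite_subset by blast
  have ne: "A \<noteq> {}" using Suc.prems(3) by auto
  have Ap: "card A > 0" using fin ne by (simp add: card_gt_0_iff)
  have r01: "0 < r" "r \<le> 1" using lam by (auto simp: r_def)
  let ?F = "FF P G A"
  have Fsub: "?F \<subseteq> A" by (auto simp: FF_def)
  have bnd: "avg (A - {x}) (\<lambda>ys. exp (- l * rc P G (take (Suc k) (x # ys)))) \<le> (if x \<in> ?F then r else 1) * c ^ k"
    if x: "x \<in> A" for x
  proof (cases "fb P G x")
    case True
    have xF: "x \<in> ?F" using x True by (simp add: FF_def)
    have FF': "FF P G (A - {x}) = ?F - {x}" by (auto simp: FF_def)
    have cF: "card (?F - {x}) = card ?F - 1" using xF by simp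
    have cA: "card (A - {x}) = card A - 1" using x by simp
    have cFp: "card ?F \<ge> 1" using xF fin Fsub by (metis One_nat_def Suc_leI card_gt_0_iff empty_iff finite_subset)
    have "avg (A - {x}) (\<lambda>ys. exp (- l * rc P G (take k ys))) \<le> c ^ k"
      unfolding c_def r_def
    proof (rule Suc.IH)
      show "ginv P n G" by fact
      show "A - {x} \<subseteq> Kn_edges n" using Suc.prems by auto
      show "k \<le> card (A - {x})" using Suc.prems(3) cA by simp
      have "q * real (card (A - {x})) \<le> q * real (card A)" using q cA Ap by (simp add: mult_left_mono)
      then show "q * real (card (A - {x})) + real k \<le> real (card (FF P G (A - {x})))"
        using Suc.prems(4) FF' cF cFp by (simp add: of_nat_diff)
    qed
    moreover have "\<And>ys. exp (- l * rc P G (take (Suc k) (x # ys))) = r * exp (- l * rc P G (take k ys))"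
      using True by (simp add: proc_step_fb r_def algebra_simps exp_add[symmetric])
    ultimately show ?thesis using xF r01 by (simp add: avg_scale)
  next
    case False
    let ?G' = "(verts G, insert x (edges G))"
    have xF: "x \<notin> ?F" using False by (simp add: FF_def)
    have ps: "proc_step P x G = ?G'" using False by (simp add: proc_step_fb)
    have sub: "?F \<subseteq> FF P ?G' (A - {x})"
    proof
      fix e assume e: "e \<in> ?F"
      then have "e \<noteq> x" using xF by auto
      moreover have "fb P ?G' e"
        by (rule fb_mono[OF adm Suc.prems(1)]) (use e x False Suc.prems(2) in \<open>auto simp: FF_def\<close>)
      ultimately show "e \<in> FF P ?G' (A - {x})" using e by (auto simp: FF_def)
    qed
    have cA: "card (A - {x}) = card A - 1" using x by simp
    have "card ?F \<le> card (FF P ?G' (A - {x}))"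
      by (rule card_mono[OF _ sub]) (use fin in \<open>auto simp: FF_def\<close>)
    have "avg (A - {x}) (\<lambda>ys. exp (- l * rc P ?G' (take k ys))) \<le> c ^ k"
      unfolding c_def r_def
    proof (rule Suc.IH)
      show "ginv P n ?G'" using ginv_step[OF Suc.prems(1), of x] ps by simp
      show "A - {x} \<subseteq> Kn_edges n" using Suc.prems by auto
      show "k \<le> card (A - {x})" using Suc.prems(3) cA by simp
      have "q * real (card (A - {x})) \<le> q * real (card A)" using q cA Ap by (simp add: mult_left_mono)
      then show "q * real (card (A - {x})) + real k \<le> real (card (FF P ?G' (A - {x})))"
        using Suc.prems(4) \<open>card ?F \<le> card (FF P ?G' (A - {x}))\<close> by linarith
    qed
    moreover have "\<And>ys. rc P G (take (Suc k) (x # ys)) = rc P ?G' (take k ys)"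
      using False ps by simp
    ultimately show ?thesis using xF by simp
  qed
  have ck: "c ^ k \<ge> 0" by (simp add: c_def)
  have "avg A (\<lambda>xs. exp (- l * rc P G (take (Suc k) xs)))
      = (\<Sum>x\<in>A. avg (A - {x}) (\<lambda>ys. exp (- l * rc P G (take (Suc k) (x # ys))))) / card A"
    by (rule avg_cons[OF fin ne])
  also have "\<dots> \<le> (\<Sum>x\<in>A. (if x \<in> ?F then r else 1) * c ^ k) / card A"
    by (intro divide_right_mono sum_mono bnd) auto
  also have "\<dots> = c ^ k * ((r * card ?F + (card A - card ?F)) / card A)"
    unfolding sum_distrib_right[symmetric] sum_weights[OF fin Fsub, of r] by simp
  also have "(r * card ?F + (card A - card ?F)) / card A = 1 - (1 - r) * (card ?F / card A)"
    using Ap card_mono[OF fin Fsub] by (simp add: field_simps of_nat_diff)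
  also have "\<dots> \<le> 1 - (1 - r) * q"
  proof -
    have "q \<le> card ?F / card A" using Suc.prems(4) Ap by (simp add: field_simps)
    then have "(1 - r) * q \<le> (1 - r) * (card ?F / card A)" using r01 by (intro mult_left_mono) auto
    then show ?thesis by linarith
  qed
  also have "\<dots> \<le> c" unfolding c_def using exp_ge_add_one_self[of "- q * (1 - r)"] by (simp add: mult.commute)
  finally have "avg A (\<lambda>xs. exp (- l * rc P G (take (Suc k) xs))) \<le> c ^ k * c"
    using ck by (meson mult_left_mono)
  then show ?case by (simp add: c_def r_def mult.commute)
qed



lemma part1_prefix:
  fixes l q :: real
  assumes adm: "admissible_class P" and lam: "l \<ge> 0" and q: "q \<ge> 0"
  shows "ginv P n G \<Longrightarrow> A \<subseteq> Kn_edges n \<Longrightarrow> j + k \<le> card A \<Longrightarrow>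
     avg A (\<lambda>xs. if q * card (A - set (take j xs)) + k \<le> card (FF P (fold (proc_step P) (take j xs) G) (A - set (take j xs)))
                  then exp (- l * rc P (fold (proc_step P) (take j xs) G) (take k (drop j xs))) else 0)
       \<le> exp (- q * (1 - exp (- l))) ^ k"
proof (induction j arbitrary: G A)
  case 0
  have fin: "finite A" using 0 finite_Kn finite_subset by blast
  show ?case
  proof (cases "q * card A + k \<le> card (FF P G A)")
    case True
    then show ?thesis using part1_core[OF adm lam q 0(1,2) _ True] 0(3) by simp
  next
    case False
    then show ?thesis using fin by (simp add: avg_const)
  qed
next
  case (Suc j)
  have fin: "finite A" using Suc finite_Kn finite_subset by blast
  have ne: "A \<noteq> {}" using Suc.prems(3) by auto
  show ?case
  proof (rule avg_bound_cons[OF fin ne])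
    fix x assume x: "x \<in> A"
    have eq: "\<And>ys. A - set (x # take j ys) = (A - {x}) - set (take j ys)" by auto
    have "avg (A - {x}) (\<lambda>ys. if q * card ((A - {x}) - set (take j ys)) + k \<le> card (FF P (fold (proc_step P) (take j ys) (proc_step P x G)) ((A - {x}) - set (take j ys)))
                  then exp (- l * rc P (fold (proc_step P) (take j ys) (proc_step P x G)) (take k (drop j ys))) else 0)
       \<le> exp (- q * (1 - exp (- l))) ^ k"
      by (rule Suc.IH) (use Suc.prems x ginv_step in \<open>auto\<close>)
    then show "avg (A - {x}) (\<lambda>ys. (\<lambda>xs. if q * card (A - set (take (Suc j) xs)) + k \<le> card (FF P (fold (proc_step P) (take (Suc j) xs) G) (A - set (take (Suc j) xs)))
                  then exp (- l * rc P (fold (proc_step P) (take (Suc j) xs) G) (take k (drop (Suc j) xs))) else 0) (x # ys))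
       \<le> exp (- q * (1 - exp (- l))) ^ k"
      by (simp only: eq take_Suc_Cons drop_Suc_Cons fold_Cons comp_def)
  qed
qed



fun rt :: "graph set \<Rightarrow> nat \<Rightarrow> real \<Rightarrow> graph \<Rightarrow> nat set list \<Rightarrow> nat" where
  "rt P n \<theta> G [] = 0"
| "rt P n \<theta> G (x # xs) = (if fb P G x \<and> real (forb P n G) < \<theta> then 1 else 0) + rt P n \<theta> (proc_step P x G) xs"

lemma FF_le_forb:
  assumes "ginv P n G" "A \<subseteq> Kn_edges n"
  shows "card (FF P G A) \<le> forb P n G"
  unfolding forb_def
proof (rule card_mono)
  show "finite {e \<in> Kn_edges n - edges G. (verts G, insert e (edges G)) \<notin> P}" using finite_Kn by auto
  show "FF P G A \<subseteq> {e \<in> Kn_edges n - edges G. (verts G, insert e (edges G)) \<notin> P}"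
    using assms fb_in_edges[of G P] unfolding FF_def ginv_def by (auto simp: fb_def)
qed

lemma part2_core:
  fixes l q \<theta> :: real
  assumes adm: "admissible_class P" and lam: "l \<ge> 0" and q: "q \<ge> 0"
  shows "ginv P n G \<Longrightarrow> A \<subseteq> Kn_edges n \<Longrightarrow> k \<le> card A \<Longrightarrow> \<theta> \<le> q * (real (card A) - k) \<Longrightarrow>
     avg A (\<lambda>xs. exp (l * rt P n \<theta> G (take k xs))) \<le> exp (q * (exp l - 1)) ^ k"
proof (induction k arbitrary: G A)
  case 0
  have "finite A" using 0 finite_Kn finite_subset by blast
  then show ?case by (simp add: avg_const)
next
  case (Suc k)
  define r where "r = exp l"
  define c where "c = exp (q * (r - 1))"
  have fin: "finite A" using Suc finite_Kn finite_subset by blast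
  have ne: "A \<noteq> {}" using Suc.prems(3) by auto
  have Ap: "card A > 0" using fin ne by (simp add: card_gt_0_iff)
  have r1: "r \<ge> 1" using lam by (auto simp: r_def)
  define B where "B = (if forb P n G < \<theta> then FF P G A else {})"
  have Bsub: "B \<subseteq> A" by (auto simp: FF_def B_def)
  have bnd: "avg (A - {x}) (\<lambda>ys. exp (l * rt P n \<theta> G (take (Suc k) (x # ys)))) \<le> (if x \<in> B then r else 1) * c ^ k"
    if x: "x \<in> A" for x
  proof -
    have cA: "card (A - {x}) = card A - 1" using x by simp
    have IH: "avg (A - {x}) (\<lambda>ys. exp (l * rt P n \<theta> (proc_step P x G) (take k ys))) \<le> c ^ k"
      unfolding c_def r_def
    proof (rule Suc.IH)
      show "ginv P n (proc_step P x G)" using ginv_step[OF Suc.prems(1)] .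
      show "A - {x} \<subseteq> Kn_edges n" using Suc.prems by auto
      show "k \<le> card (A - {x})" using Suc.prems(3) cA by simp
      have c1: "card A \<ge> Suc 0" using Ap by simp
      have h: "real (card (A - {x})) = real (card A) - 1" using cA c1 by (simp add: of_nat_diff)
      show "\<theta> \<le> q * (real (card (A - {x})) - real k)" unfolding h using Suc.prems(4) by (simp add: algebra_simps)
    qed
    have e: "\<And>ys. exp (l * rt P n \<theta> G (take (Suc k) (x # ys))) = (if x \<in> B then r else 1) * exp (l * rt P n \<theta> (proc_step P x G) (take k ys))"
      using x by (auto simp: B_def FF_def r_def algebra_simps exp_add[symmetric])
    show ?thesis unfolding e avg_scale using IH r1 by (intro mult_left_mono) auto
  qed
  have ck: "c ^ k \<ge> 0" by (simp add: c_def)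
  have pB: "card B / card A \<le> q"
  proof (cases "forb P n G < \<theta>")
    case True
    have "card B \<le> forb P n G" using FF_le_forb[OF Suc.prems(1,2)] True by (simp add: B_def)
    then have "real (card B) \<le> q * card A" using True Suc.prems(4) q
      by (smt (verit) of_nat_0_le_iff of_nat_mono mult_left_mono)
    then show ?thesis using Ap by (simp add: field_simps)
  next
    case False then show ?thesis using q by (simp add: B_def)
  qed
  have "avg A (\<lambda>xs. exp (l * rt P n \<theta> G (take (Suc k) xs)))
      = (\<Sum>x\<in>A. avg (A - {x}) (\<lambda>ys. exp (l * rt P n \<theta> G (take (Suc k) (x # ys))))) / card A"
    by (rule avg_cons[OF fin ne])
  also have "\<dots> \<le> (\<Sum>x\<in>A. (if x \<in> B then r else 1) * c ^ k) / card A"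
    by (intro divide_right_mono sum_mono bnd) auto
  also have "\<dots> = c ^ k * ((r * card B + (card A - card B)) / card A)"
    unfolding sum_distrib_right[symmetric] sum_weights[OF fin Bsub, of r] by simp
  also have "(r * card B + (card A - card B)) / card A = 1 + (r - 1) * (card B / card A)"
    using Ap card_mono[OF fin Bsub] by (simp add: field_simps of_nat_diff)
  also have "\<dots> \<le> 1 + (r - 1) * q"
  proof -
    have "(r - 1) * (card B / card A) \<le> (r - 1) * q" using r1 pB by (intro mult_left_mono) auto
    then show ?thesis by linarith
  qed
  also have "\<dots> \<le> c" unfolding c_def using exp_ge_add_one_self[of "q * (r - 1)"] by (simp add: mult.commute)
  finally have "avg A (\<lambda>xs. exp (l * rt P n \<theta> G (take (Suc k) xs))) \<le> c ^ k * c"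
    using ck by (meson mult_left_mono)
  then show ?case by (simp add: c_def r_def mult.commute)
qed

lemma part2_prefix:
  fixes l q \<theta> :: real
  assumes adm: "admissible_class P" and lam: "l \<ge> 0" and q: "q \<ge> 0"
  shows "ginv P n G \<Longrightarrow> A \<subseteq> Kn_edges n \<Longrightarrow> j + k \<le> card A \<Longrightarrow> \<theta> \<le> q * (real (card A) - j - k) \<Longrightarrow>
     avg A (\<lambda>xs. exp (l * rt P n \<theta> (fold (proc_step P) (take j xs) G) (take k (drop j xs))))
       \<le> exp (q * (exp l - 1)) ^ k"
proof (induction j arbitrary: G A)
  case 0
  then show ?case using part2_core[OF adm lam q 0(1,2), of k \<theta>] by simp
next
  case (Suc j)
  have fin: "finite A" using Suc finite_Kn finite_subset by blast
  have ne: "A \<noteq> {}" using Suc.prems(3) by auto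
  show ?case
  proof (rule avg_bound_cons[OF fin ne])
    fix x assume x: "x \<in> A"
    have cA: "card (A - {x}) = card A - 1" using x by simp
    have "avg (A - {x}) (\<lambda>ys. exp (l * rt P n \<theta> (fold (proc_step P) (take j ys) (proc_step P x G)) (take k (drop j ys))))
       \<le> exp (q * (exp l - 1)) ^ k"
    proof (rule Suc.IH)
      show "ginv P n (proc_step P x G)" using ginv_step[OF Suc.prems(1)] .
      show "A - {x} \<subseteq> Kn_edges n" using Suc.prems by auto
      show "j + k \<le> card (A - {x})" using Suc.prems(3) cA by simp
      have c1: "card A \<ge> Suc 0" using ne fin by (simp add: Suc_le_eq card_gt_0_iff)
      have h: "real (card (A - {x})) = real (card A) - 1" using cA c1 by (simp add: of_nat_diff)
      show "\<theta> \<le> q * (real (card (A - {x})) - real j - real k)" unfolding h using Suc.prems(4) by (simp add: algebra_simps)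
    qed
    then show "avg (A - {x}) (\<lambda>ys. (\<lambda>xs. exp (l * rt P n \<theta> (fold (proc_step P) (take (Suc j) xs) G) (take k (drop (Suc j) xs)))) (x # ys))
       \<le> exp (q * (exp l - 1)) ^ k"
      by simp
  qed
qed



lemma forb_step_mono:
  assumes adm: "admissible_class P" and g: "ginv P n G" and x: "x \<in> Kn_edges n"
  shows "forb P n G \<le> forb P n (proc_step P x G)"
proof (cases "fb P G x")
  case True then show ?thesis by (simp add: proc_step_fb)
next
  case False
  let ?G' = "(verts G, insert x (edges G))"
  have "{e \<in> Kn_edges n - edges G. (verts G, insert e (edges G)) \<notin> P}
      \<subseteq> {e \<in> Kn_edges n - edges ?G'. (verts ?G', insert e (edges ?G')) \<notin> P}"
  proof
    fix e assume e: "e \<in> {e \<in> Kn_edges n - edges G. (verts G, insert e (edges G)) \<notin> P}"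
    then have fe: "fb P G e" by (simp add: fb_def)
    then have "e \<noteq> x" using False by auto
    moreover have "fb P ?G' e" using fb_mono[OF adm g x False _ fe] e by simp
    ultimately show "e \<in> {e \<in> Kn_edges n - edges ?G'. (verts ?G', insert e (edges ?G')) \<notin> P}"
      using e by (simp add: fb_def edges_def verts_def)
  qed
  then have "forb P n G \<le> forb P n ?G'" unfolding forb_def
    by (intro card_mono) (use finite_Kn in auto)
  then show ?thesis using False by (simp add: proc_step_fb)
qed

lemma forb_fold_mono:
  assumes adm: "admissible_class P"
  shows "ginv P n G \<Longrightarrow> set ys \<subseteq> Kn_edges n \<Longrightarrow> forb P n G \<le> forb P n (fold (proc_step P) ys G)"
proof (induction ys arbitrary: G)
  case Nil then show ?case by simp
next
  case (Cons x ys)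
  have "forb P n G \<le> forb P n (proc_step P x G)" using forb_step_mono[OF adm Cons.prems(1)] Cons.prems(2) by simp
  also have "\<dots> \<le> forb P n (fold (proc_step P) ys (proc_step P x G))"
    using Cons.IH[OF ginv_step[OF Cons.prems(1)]] Cons.prems(2) by simp
  finally show ?case by simp
qed

lemma rt_rc:
  assumes adm: "admissible_class P"
  shows "ginv P n G \<Longrightarrow> set ys \<subseteq> Kn_edges n \<Longrightarrow> real (forb P n (fold (proc_step P) ys G)) < \<theta> \<Longrightarrow>
    rt P n \<theta> G ys = rc P G ys"
proof (induction ys arbitrary: G)
  case Nil then show ?case by simp
next
  case (Cons x ys)
  have "forb P n G \<le> forb P n (fold (proc_step P) (x # ys) G)"
    using forb_fold_mono[OF adm Cons.prems(1,2)] .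
  then have "real (forb P n G) < \<theta>" using Cons.prems(3) by linarith
  moreover have "rt P n \<theta> (proc_step P x G) ys = rc P (proc_step P x G) ys"
    using Cons.IH[OF ginv_step[OF Cons.prems(1)]] Cons.prems(2,3) by simp
  ultimately show ?case by simp
qed

lemma rc_le: "rc P G ys \<le> length ys"
proof (induction ys arbitrary: G)
  case Nil then show ?case by simp
next
  case (Cons x ys)
  have "rc P (proc_step P x G) ys \<le> length ys" by (rule Cons.IH)
  then show ?case by simp
qed

lemma card_Kn: "card (Kn_edges n) = n choose 2"
proof -
  have "Kn_edges n = {B. B \<subseteq> {1..n} \<and> card B = 2}"
    unfolding Kn_edges_def by (auto simp: card_2_iff; blast)
  then show ?thesis using n_subsets[of "{1..n}" 2] by simp
qed

lemma ginv_G0: "admissible_class P \<Longrightarrow> ginv P n ({1..n}, {})"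
proof -
  assume "admissible_class P"
  then have "\<forall>V. finite V \<longrightarrow> (V, {}) \<in> P" unfolding admissible_class_def by (elim conjE)
  then show ?thesis unfolding ginv_def by (simp add: verts_def)
qed

lemma exp_minus_upper: "l \<ge> 0 \<Longrightarrow> 1 - exp (- l) \<ge> l - l ^ 2" for l :: real
proof -
  assume l: "l \<ge> 0"
  have "exp l \<ge> 1 + l" by (rule exp_ge_add_one_self)
  then have "exp (- l) \<le> 1 / (1 + l)" using l by (simp add: exp_minus field_simps)
  also have "\<dots> \<le> 1 - l + l ^ 2" using l by (simp add: field_simps power2_eq_square)
  finally show ?thesis by simp
qed

lemma exp_upper: "l \<ge> 0 \<Longrightarrow> l \<le> 1/2 \<Longrightarrow> exp l - 1 \<le> l + 2 * l ^ 2" for l :: real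
proof -
  assume l: "l \<ge> 0" "l \<le> 1/2"
  have "exp (- l) \<ge> 1 - l" using exp_ge_add_one_self[of "- l"] by simp
  then have "exp l \<le> 1 / (1 - l)" using l by (simp add: exp_minus field_simps)
  also have "\<dots> \<le> 1 + l + 2 * l ^ 2"
  proof -
    have e: "(1 - l) * (1 + l + 2 * l ^ 2) = 1 + l ^ 2 * (1 - 2 * l)" by (simp add: algebra_simps power2_eq_square)
    have "l ^ 2 * (1 - 2 * l) \<ge> 0" using l by simp
    then have "1 \<le> (1 - l) * (1 + l + 2 * l ^ 2)" unfolding e by simp
    then show ?thesis using l by (simp add: field_simps)
  qed
  finally show ?thesis by simp
qed



lemma perm_facts:
  assumes "xs \<in> permutations_of_set (Kn_edges n)"
  shows "distinct xs" "set xs = Kn_edges n" "length xs = card (Kn_edges n)"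
  using assms by (auto simp: permutations_of_set_def) (metis distinct_card)

lemma rej_split:
  assumes xs: "xs \<in> permutations_of_set (Kn_edges n)" and t: "t1 \<le> t2" "t2 \<le> card (Kn_edges n)"
  shows "real (rej P n xs t2) - real (rej P n xs t1)
       = real (rc P (fold (proc_step P) (take t1 xs) ({1..n}, {})) (take (t2 - t1) (drop t1 xs)))"
proof -
  note pf = perm_facts[OF xs]
  have "rej P n xs t2 = rc P ({1..n}, {}) (take t2 xs)" using rej_rc[OF xs] t pf by simp
  also have "take t2 xs = take t1 xs @ take (t2 - t1) (drop t1 xs)"
    using take_add[of t1 "t2 - t1" xs] t by simp
  finally have "rej P n xs t2 = rc P ({1..n}, {}) (take t1 xs) + rc P (fold (proc_step P) (take t1 xs) ({1..n}, {})) (take (t2 - t1) (drop t1 xs))"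
    by (simp add: rc_append)
  moreover have "rej P n xs t1 = rc P ({1..n}, {}) (take t1 xs)" using rej_rc[OF xs] t pf by simp
  ultimately show ?thesis by simp
qed

lemma exponent1:
  fixes a \<delta> :: real
  assumes "a > 0" "0 < \<delta>" "\<delta> \<le> 1"
  shows "exp ((\<delta>/8) * a * real k) * exp (- ((1 + \<delta>/2) * a) * (1 - exp (- (\<delta>/8)))) ^ k \<le> exp (- a * real k * \<delta>^2 / 32)"
proof -
  let ?l = "\<delta>/8" and ?q = "(1 + \<delta>/2) * a"
  have "?q * (1 - exp (- ?l)) \<ge> ?q * (?l - ?l^2)"
    using exp_minus_upper[of ?l] assms by (intro mult_left_mono) auto
  moreover have "a * ?l - ?q * (?l - ?l^2) + a * \<delta>^2 / 32 = a * \<delta>^2 * (\<delta> - 2) / 128"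
    by (simp add: algebra_simps power2_eq_square)
  moreover have "a * \<delta>^2 * (\<delta> - 2) / 128 \<le> 0" using assms
    by (simp add: mult_nonneg_nonpos divide_nonpos_pos)
  ultimately have key: "?l * a - ?q * (1 - exp (- ?l)) \<le> - a * \<delta>^2 / 32" by (simp add: algebra_simps)
  have "exp (?l * a * real k) * exp (- ?q * (1 - exp (- ?l))) ^ k = exp (real k * (?l * a - ?q * (1 - exp (- ?l))))"
    by (simp add: exp_of_nat_mult[symmetric] exp_add[symmetric] algebra_simps)
  also have "\<dots> \<le> exp (real k * (- a * \<delta>^2 / 32))"
    using key by (intro exp_mono mult_left_mono) auto
  finally show ?thesis by (simp add: algebra_simps)
qed

lemma part1_n:
  fixes a \<delta> :: real
  assumes adm: "admissible_class P" and a: "a > 0" and d: "0 < \<delta>" "\<delta> \<le> 1"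
    and t: "t1 \<le> t2" "t2 \<le> card (Kn_edges n)" "real t2 \<le> \<delta>/2 * a * card (Kn_edges n)"
  shows "measure_pmf.prob (ordering_pmf n)
     {xs. real (forb P n (proc P n xs t1)) > (1 + \<delta>) * a * card (Kn_edges n) \<and>
          real (rej P n xs t2) - real (rej P n xs t1) \<le> a * (real t2 - real t1)}
    \<le> exp (- a * (real t2 - real t1) * \<delta>^2 / 32)"
proof -
  define K where "K = Kn_edges n"
  define N where "N = card K"
  define k where "k = t2 - t1"
  define l where "l = \<delta>/8"
  define q where "q = (1 + \<delta>/2) * a"
  define G0 where "G0 = ({1..n}, {}::nat set set)"
  define g where "g = (\<lambda>xs. if q * card (K - set (take t1 xs)) + k \<le> card (FF P (fold (proc_step P) (take t1 xs) G0) (K - set (take t1 xs)))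
                  then exp (- l * rc P (fold (proc_step P) (take t1 xs) G0) (take k (drop t1 xs))) else 0)"
  define E where "E = (\<lambda>xs. real (forb P n (proc P n xs t1)) > (1 + \<delta>) * a * card (Kn_edges n) \<and>
          real (rej P n xs t2) - real (rej P n xs t1) \<le> a * (real t2 - real t1))"
  have finK: "finite K" unfolding K_def by (rule finite_Kn)
  have kr: "real k = real t2 - real t1" using t by (simp add: k_def)
  have l0: "l \<ge> 0" "q \<ge> 0" using d a by (auto simp: l_def q_def)
  have avg_g: "avg K g \<le> exp (- q * (1 - exp (- l))) ^ k"
    unfolding g_def K_def G0_def
    by (rule part1_prefix[OF adm l0 ginv_G0[OF adm]]) (use t in \<open>auto simp: k_def\<close>)
  have pt: "(if E xs then 1 else 0) \<le> exp (l * a * k) * g xs" if xs: "xs \<in> permutations_of_set K" for xs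
  proof (cases "E xs")
    case False
    then show ?thesis by (simp add: g_def)
  next
    case True
    note pf = perm_facts[OF xs[unfolded K_def]]
    define G1 where "G1 = fold (proc_step P) (take t1 xs) G0"
    define S where "S = set (take t1 xs)"
    have G1p: "proc P n xs t1 = G1" unfolding G1_def G0_def proc_def ..
    have Ssub: "S \<subseteq> K" unfolding S_def K_def using pf set_take_subset by metis
    have cardS: "card S = t1" unfolding S_def using pf t by (simp add: distinct_card)
    have cardA: "card (K - S) = N - t1" unfolding N_def using card_Diff_subset[OF finite_subset[OF Ssub finK] Ssub] cardS by simp
    have cardAr: "real (card (K - S)) \<le> N" unfolding N_def using finK by (simp add: card_mono)
    have fsub: "{e \<in> Kn_edges n - edges G1. (verts G1, insert e (edges G1)) \<notin> P} \<subseteq> FF P G1 (K - S) \<union> S"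
      by (auto simp: FF_def fb_def K_def)
    have "forb P n G1 \<le> card (FF P G1 (K - S) \<union> S)"
      unfolding forb_def by (rule card_mono[OF _ fsub]) (use finK Ssub in \<open>auto simp: FF_def intro: finite_subset\<close>)
    also have "\<dots> \<le> card (FF P G1 (K - S)) + card S" by (rule card_Un_le)
    finally have fb1: "real (forb P n G1) \<le> card (FF P G1 (K - S)) + t1" using cardS by simp
    have ev: "real (forb P n G1) > (1 + \<delta>) * a * N" using True G1p by (simp add: E_def N_def K_def)
    have "q * card (K - S) \<le> q * N" using cardAr l0 by (intro mult_left_mono) auto
    moreover have "q * N = (1 + \<delta>) * a * N - \<delta>/2 * a * N" by (simp add: q_def algebra_simps)
    moreover have "real t2 \<le> \<delta>/2 * a * N" using t by (simp add: N_def K_def)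
    moreover have "real t2 = real t1 + real k" using kr by simp
    ultimately have cond: "q * card (K - S) + k \<le> card (FF P G1 (K - S))" using fb1 ev by linarith
    have R: "real (rej P n xs t2) - real (rej P n xs t1) = real (rc P G1 (take k (drop t1 xs)))"
      using rej_split[OF xs[unfolded K_def] t(1,2)] by (simp add: G1_def G0_def k_def)
    have Rle: "real (rc P G1 (take k (drop t1 xs))) \<le> a * k" using True R kr by (simp add: E_def)
    have gx: "g xs = exp (- l * rc P G1 (take k (drop t1 xs)))"
      using cond by (simp add: g_def G1_def S_def)
    have "exp (l * a * k) * g xs = exp (l * (a * k - rc P G1 (take k (drop t1 xs))))"
      by (simp add: gx exp_add[symmetric] algebra_simps)
    also have "\<dots> \<ge> 1" using Rle l0 by simp
    finally show ?thesis using True by simp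
  qed
  have "measure_pmf.prob (ordering_pmf n) {xs. E xs} = avg K (\<lambda>xs. if E xs then 1 else 0)"
    unfolding ordering_pmf_def K_def by (rule prob_avg[OF finite_Kn])
  also have "\<dots> \<le> avg K (\<lambda>xs. exp (l * a * k) * g xs)" by (rule avg_mono[OF pt])
  also have "\<dots> = exp (l * a * k) * avg K g" by (rule avg_scale)
  also have "\<dots> \<le> exp (l * a * k) * exp (- q * (1 - exp (- l))) ^ k"
    using avg_g by (intro mult_left_mono) auto
  also have "\<dots> \<le> exp (- a * real k * \<delta>^2 / 32)"
    unfolding l_def q_def by (rule exponent1[OF a d])
  finally show ?thesis unfolding E_def kr .
qed



lemma exponent2:
  fixes a \<delta> q :: real
  assumes "a > 0" "0 < \<delta>" "\<delta> \<le> 1" "0 \<le> q" "q \<le> (1 - \<delta>/2) * a"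
  shows "exp (- (\<delta>/8) * a * real k) * exp (q * (exp (\<delta>/8) - 1)) ^ k \<le> exp (- a * real k * \<delta>^2 / 32)"
proof -
  let ?l = "\<delta>/8"
  have e1: "exp ?l - 1 \<le> ?l + 2 * ?l^2" using exp_upper[of ?l] assms by simp
  have e0: "exp ?l - 1 \<ge> 0" using assms by simp
  have "q * (exp ?l - 1) \<le> (1 - \<delta>/2) * a * (exp ?l - 1)" using assms e0 by (intro mult_right_mono) auto
  also have "\<dots> \<le> (1 - \<delta>/2) * a * (?l + 2 * ?l^2)" using assms e1 by (intro mult_left_mono) auto
  finally have h: "q * (exp ?l - 1) \<le> (1 - \<delta>/2) * a * (?l + 2 * ?l^2)" .
  have "- ?l * a + (1 - \<delta>/2) * a * (?l + 2 * ?l^2) + a * \<delta>^2 / 32 = - a * \<delta>^3 / 64"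
    by (simp add: power2_eq_square power3_eq_cube field_simps)
  moreover have "a * \<delta>^3 / 64 \<ge> 0" using assms by simp
  ultimately have key: "- ?l * a + q * (exp ?l - 1) \<le> - a * \<delta>^2 / 32" using h by linarith
  have "exp (- ?l * a * real k) * exp (q * (exp ?l - 1)) ^ k = exp (real k * (- ?l * a + q * (exp ?l - 1)))"
    by (simp add: exp_of_nat_mult[symmetric] exp_add[symmetric] algebra_simps)
  also have "\<dots> \<le> exp (real k * (- a * \<delta>^2 / 32))"
    using key by (intro exp_mono mult_left_mono) auto
  finally show ?thesis by (simp add: algebra_simps)
qed

lemma part2_n:
  fixes a \<delta> :: real
  assumes adm: "admissible_class P" and a: "a > 0" and d: "0 < \<delta>" "\<delta> \<le> 1"
    and t: "t1 \<le> t2" "t2 \<le> card (Kn_edges n)" "real t2 \<le> \<delta>/2 * a * card (Kn_edges n)"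
  shows "measure_pmf.prob (ordering_pmf n)
     {xs. real (forb P n (proc P n xs t2)) < (1 - \<delta>) * a * card (Kn_edges n) \<and>
          real (rej P n xs t2) - real (rej P n xs t1) \<ge> a * (real t2 - real t1)}
    \<le> exp (- a * (real t2 - real t1) * \<delta>^2 / 32)"
proof -
  define K where "K = Kn_edges n"
  define N where "N = card K"
  define k where "k = t2 - t1"
  define E where "E = (\<lambda>xs. real (forb P n (proc P n xs t2)) < (1 - \<delta>) * a * card (Kn_edges n) \<and>
          real (rej P n xs t2) - real (rej P n xs t1) \<ge> a * (real t2 - real t1))"
  have finK: "finite K" unfolding K_def by (rule finite_Kn)
  have kr: "real k = real t2 - real t1" using t by (simp add: k_def)
  have Rform: "real (rej P n xs t2) - real (rej P n xs t1)
       = real (rc P (fold (proc_step P) (take t1 xs) ({1..n}, {})) (take k (drop t1 xs)))"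
    if xs: "xs \<in> permutations_of_set K" for xs
    using rej_split[OF xs[unfolded K_def] t(1,2)] by (simp add: k_def)
  have Rlek: "real (rej P n xs t2) - real (rej P n xs t1) \<le> k" if xs: "xs \<in> permutations_of_set K" for xs
    unfolding Rform[OF xs] using rc_le[of P _ "take k (drop t1 xs)"] by simp
  have prob_eq: "measure_pmf.prob (ordering_pmf n) {xs. E xs} = avg K (\<lambda>xs. if E xs then 1 else 0)"
    unfolding ordering_pmf_def K_def by (rule prob_avg[OF finite_Kn])
  show ?thesis
  proof (cases "k = 0 \<or> a > 1")
    case True
    show ?thesis
    proof (cases "k = 0")
      case True
      then have z: "- a * (real t2 - real t1) * \<delta>^2 / 32 = 0" using kr by simp
      show ?thesis unfolding z using measure_pmf.prob_le_1 by simp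
    next
      case False
      with \<open>k = 0 \<or> a > 1\<close> have a1: "a > 1" by simp
      have "\<not> E xs" if xs: "xs \<in> permutations_of_set K" for xs
      proof
        assume "E xs"
        then have "a * k \<le> k" using Rlek[OF xs] kr by (simp add: E_def)
        moreover have "a * k > k" using a1 False by simp
        ultimately show False by simp
      qed
      then have "avg K (\<lambda>xs. if E xs then 1 else 0) = avg K (\<lambda>_. 0)"
        unfolding avg_def by (intro arg_cong2[where f="(/)"] sum.cong) auto
      then show ?thesis unfolding E_def[symmetric] prob_eq using finK by (simp add: avg_const)
    qed
  next
    case False
    then have k0: "k > 0" and a1: "a \<le> 1" by auto
    have t2N: "real t2 \<le> \<delta>/2 * N"
    proof -
      have "\<delta>/2 * a * N \<le> \<delta>/2 * 1 * N" using a1 d by (intro mult_right_mono mult_left_mono) auto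
      then show ?thesis using t by (simp add: N_def K_def)
    qed
    have t2pos: "t2 > 0" using k0 k_def by simp
    have dN: "\<delta> * real N \<le> real N" using d by (simp add: mult_left_le_one_le)
    have Npos: "real N - t2 \<ge> N / 2" using t2N dN by linarith
    have Npos': "real N - t2 > 0" using Npos t2pos t by (simp add: N_def K_def)
    define \<theta> where "\<theta> = (1 - \<delta>) * a * N"
    define q where "q = \<theta> / (real N - t2)"
    define l where "l = \<delta>/8"
    define G0 where "G0 = ({1..n}, {}::nat set set)"
    have th0: "\<theta> \<ge> 0" using d a by (simp add: \<theta>_def)
    have q0: "q \<ge> 0" using th0 Npos' by (simp add: q_def)
    have l0: "l \<ge> 0" using d by (simp add: l_def)
    have qbound: "q \<le> (1 - \<delta>/2) * a"
    proof -
      have "(1 - \<delta>/2) * t2 \<le> t2" using d by (simp add: mult_left_le_one_le)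
      have "\<delta> * t2 \<ge> 0" using d by simp
      then have "(1 - \<delta>) * N \<le> (1 - \<delta>/2) * (real N - t2)" using t2N by (simp add: algebra_simps) (simp add: field_simps)
      then have "\<theta> \<le> (1 - \<delta>/2) * a * (real N - t2)" using a unfolding \<theta>_def
        by (smt (verit) mult.assoc mult.commute mult_left_mono)
      then show ?thesis using Npos' by (simp add: q_def field_simps)
    qed
    have thq: "\<theta> \<le> q * (real (card K) - real t1 - real k)"
      using Npos' kr by (simp add: q_def N_def)
    define g where "g = (\<lambda>xs. exp (l * rt P n \<theta> (fold (proc_step P) (take t1 xs) G0) (take k (drop t1 xs))))"
    have avg_g: "avg K g \<le> exp (q * (exp l - 1)) ^ k"
      unfolding g_def K_def G0_def
      by (rule part2_prefix[OF adm l0 q0 ginv_G0[OF adm]]) (use t thq in \<open>auto simp: k_def K_def\<close>)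
    have pt: "(if E xs then 1 else 0) \<le> exp (- l * a * k) * g xs" if xs: "xs \<in> permutations_of_set K" for xs
    proof (cases "E xs")
      case False
      then show ?thesis by (simp add: g_def)
    next
      case True
      note pf = perm_facts[OF xs[unfolded K_def]]
      define G1 where "G1 = fold (proc_step P) (take t1 xs) G0"
      define ys where "ys = take k (drop t1 xs)"
      have g1: "ginv P n G1" unfolding G1_def G0_def by (rule ginv_fold[OF ginv_G0[OF adm]])
      have ys: "set ys \<subseteq> Kn_edges n" unfolding ys_def using pf
        by (metis set_drop_subset set_take_subset subset_trans)
      have "take t2 xs = take t1 xs @ ys" using take_add[of t1 k xs] t by (simp add: ys_def k_def)
      then have p2: "proc P n xs t2 = fold (proc_step P) ys G1" by (simp add: proc_def G1_def G0_def)
      have "real (forb P n (fold (proc_step P) ys G1)) < \<theta>" using True p2 by (simp add: E_def \<theta>_def N_def K_def)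
      then have rteq: "rt P n \<theta> G1 ys = rc P G1 ys" by (rule rt_rc[OF adm g1 ys])
      have Rge: "real (rc P G1 ys) \<ge> a * k" using True Rform[OF xs] kr by (simp add: E_def G1_def G0_def ys_def)
      have gx: "g xs = exp (l * rc P G1 ys)" by (simp add: g_def G1_def ys_def rteq[unfolded ys_def G1_def])
      have "exp (- l * a * k) * g xs = exp (l * (rc P G1 ys - a * k))"
        by (simp add: gx exp_add[symmetric] algebra_simps)
      also have "\<dots> \<ge> 1" using Rge l0 by simp
      finally show ?thesis using True by simp
    qed
    have "measure_pmf.prob (ordering_pmf n) {xs. E xs} \<le> avg K (\<lambda>xs. exp (- l * a * k) * g xs)"
      unfolding prob_eq by (rule avg_mono[OF pt])
    also have "\<dots> = exp (- l * a * k) * avg K g" by (rule avg_scale)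
    also have "\<dots> \<le> exp (- l * a * k) * exp (q * (exp l - 1)) ^ k"
      using avg_g by (intro mult_left_mono) auto
    also have "\<dots> \<le> exp (- a * real k * \<delta>^2 / 32)"
      unfolding l_def by (rule exponent2[OF a d q0 qbound])
    finally show ?thesis unfolding E_def kr .
  qed
qed



lemma real_choose2: "real (n choose 2) = real n * (real n - 1) / 2"
proof -
  have "even (n * (n - 1))" by (cases "even n") auto
  then show ?thesis unfolding choose_two by (simp add: real_of_nat_div of_nat_diff) (cases n; simp)
qed

lemma choose2_ge: "n \<ge> 2 \<Longrightarrow> real (n choose 2) \<ge> real n ^ 2 / 4"
  unfolding real_choose2 by (simp add: power2_eq_square field_simps)

lemma prob_lower:
  fixes M :: "'a pmf"
  shows "measure_pmf.prob M {x. H x} - measure_pmf.prob M {x. \<not> G x \<and> H x} \<le> measure_pmf.prob M {x. G x}"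
proof -
  have "measure_pmf.prob M {x. H x} \<le> measure_pmf.prob M ({x. G x} \<union> {x. \<not> G x \<and> H x})"
    by (rule measure_pmf.finite_measure_mono) auto
  also have "\<dots> \<le> measure_pmf.prob M {x. G x} + measure_pmf.prob M {x. \<not> G x \<and> H x}"
    by (rule measure_Un_le) auto
  finally show ?thesis by simp
qed

lemma sandwich1:
  fixes p b r :: "nat \<Rightarrow> real"
  assumes "p \<longlonglongrightarrow> 1" "b \<longlonglongrightarrow> 0" "eventually (\<lambda>n. p n - b n \<le> r n) sequentially" "\<And>n. r n \<le> 1"
  shows "r \<longlonglongrightarrow> 1"
proof (rule tendsto_sandwich[OF assms(3) _ _ tendsto_const])
  show "\<forall>\<^sub>F n in sequentially. r n \<le> 1" using assms(4) by simp
  show "(\<lambda>n. p n - b n) \<longlonglongrightarrow> 1" using tendsto_diff[OF assms(1,2)] by simp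
qed

lemma per_n:
  fixes \<alpha> X \<delta> :: real
  assumes a: "\<alpha> > 0" and X: "X = \<alpha> * (real t2 - real t1)" "X \<ge> 2" and n: "n \<ge> 2"
    and d: "\<delta> = inverse (sqrt (sqrt X)) + 8 * (real t2 / (\<alpha> * real n ^ 2))"
  shows "0 < \<delta>" "t1 \<le> t2" "real t2 \<le> \<delta>/2 * \<alpha> * real (n choose 2)"
    "exp (- \<alpha> * (real t2 - real t1) * \<delta>^2 / 32) \<le> exp (- sqrt X / 32)"
proof -
  define d0 where "d0 = inverse (sqrt (sqrt X))"
  define \<eta> where "\<eta> = real t2 / (\<alpha> * real n ^ 2)"
  have Xp: "X > 0" using X by simp
  have d0p: "d0 > 0" using Xp by (simp add: d0_def)
  have eta0: "\<eta> \<ge> 0" using a by (simp add: \<eta>_def)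
  have dd: "\<delta> = d0 + 8 * \<eta>" by (simp add: d d0_def \<eta>_def)
  show dp: "0 < \<delta>" using d0p eta0 dd by simp
  have "real t2 - real t1 > 0" using Xp X a by (simp add: zero_less_mult_iff)
  then show "t1 \<le> t2" by simp
  have np: "real n > 0" using n by simp
  have t2eq: "real t2 = \<eta> * \<alpha> * real n ^ 2" using a np by (simp add: \<eta>_def)
  have "\<eta> * \<alpha> * real n ^ 2 \<le> 4 * \<eta> * \<alpha> * real (n choose 2)"
    using choose2_ge[OF n] eta0 a by (simp add: mult_left_mono field_simps)
  also have "\<dots> \<le> \<delta>/2 * \<alpha> * real (n choose 2)"
    using dd d0p a by (intro mult_right_mono) auto
  finally show "real t2 \<le> \<delta>/2 * \<alpha> * real (n choose 2)" using t2eq by simp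
  have "\<delta>^2 \<ge> d0^2" using dd d0p eta0 by (intro power_mono) auto
  moreover have "d0^2 = inverse (sqrt X)" using Xp by (simp add: d0_def power_inverse)
  ultimately have "X * \<delta>^2 \<ge> X * inverse (sqrt X)" using Xp by (intro mult_left_mono) auto
  moreover have "X * inverse (sqrt X) = sqrt X" using Xp by (metis divide_inverse real_div_sqrt less_imp_le)
  ultimately have "X * \<delta>^2 \<ge> sqrt X" by simp
  then show "exp (- \<alpha> * (real t2 - real t1) * \<delta>^2 / 32) \<le> exp (- sqrt X / 32)" using X by simp
qed



theorem mainTheorem10:
  fixes P :: "graph set" and t1 t2 :: "nat \<Rightarrow> nat" and \<alpha> :: "nat \<Rightarrow> real"
  assumes "admissible_class P"
    and "\<forall>\<^sub>F n in sequentially. t1 n \<in> {1..n choose 2} \<and> t2 n \<in> {1..n choose 2}"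
    and "\<forall>n. \<alpha> n > 0"
    and "filterlim (\<lambda>n. \<alpha> n * (real (t2 n) - real (t1 n))) at_top sequentially"
    and "(\<lambda>n. real (t2 n) / (\<alpha> n * real n ^ 2)) \<longlonglongrightarrow> 0"
  shows "(whp (\<lambda>n xs. real (rej P n xs (t2 n)) - real (rej P n xs (t1 n))
                       \<le> \<alpha> n * (real (t2 n) - real (t1 n)))
          \<longrightarrow> (\<exists>\<epsilon>. \<epsilon> \<longlonglongrightarrow> 0 \<and>
                 whp (\<lambda>n xs. real (forb P n (proc P n xs (t1 n)))
                               \<le> (1 + \<epsilon> n) * \<alpha> n * real (n choose 2))))
       \<and> (whp (\<lambda>n xs. real (rej P n xs (t2 n)) - real (rej P n xs (t1 n))
                       \<ge> \<alpha> n * (real (t2 n) - real (t1 n)))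
          \<longrightarrow> (\<exists>\<epsilon>. \<epsilon> \<longlonglongrightarrow> 0 \<and>
                 whp (\<lambda>n xs. real (forb P n (proc P n xs (t2 n)))
                               \<ge> (1 + \<epsilon> n) * \<alpha> n * real (n choose 2))))"
proof -
  note adm = assms(1)
  define X where "X n = \<alpha> n * (real (t2 n) - real (t1 n))" for n
  define \<delta> where "\<delta> n = inverse (sqrt (sqrt (X n))) + 8 * (real (t2 n) / (\<alpha> n * real n ^ 2))" for n
  define b where "b n = exp (- sqrt (X n) / 32)" for n
  have Xlim: "filterlim X at_top sequentially" using assms(4) unfolding X_def .
  have sq: "filterlim (\<lambda>n. sqrt (X n)) at_top sequentially"
    by (rule filterlim_compose[OF sqrt_at_top Xlim])
  have "filterlim (\<lambda>n. sqrt (sqrt (X n))) at_top sequentially"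
    by (rule filterlim_compose[OF sqrt_at_top sq])
  then have l1: "(\<lambda>n. inverse (sqrt (sqrt (X n)))) \<longlonglongrightarrow> 0" by (rule tendsto_inverse_0_at_top)
  have l2: "(\<lambda>n. 8 * (real (t2 n) / (\<alpha> n * real n ^ 2))) \<longlonglongrightarrow> 0"
    using tendsto_mult[OF tendsto_const[of 8] assms(5)] by simp
  have dlim: "\<delta> \<longlonglongrightarrow> 0" unfolding \<delta>_def using tendsto_add[OF l1 l2] by simp
  have ex: "((\<lambda>y::real. exp (- y / 32)) \<longlongrightarrow> 0) at_top" by real_asymp
  have blim: "b \<longlonglongrightarrow> 0" unfolding b_def by (rule filterlim_compose[OF ex sq])
  have ev: "\<forall>\<^sub>F n in sequentially. (t1 n \<in> {1..n choose 2} \<and> t2 n \<in> {1..n choose 2}) \<and> X n \<ge> 2 \<and> n \<ge> 2 \<and> \<delta> n < 1"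
  proof -
    have e1: "\<forall>\<^sub>F n in sequentially. X n \<ge> 2" using Xlim[unfolded filterlim_at_top] by blast
    have e2: "\<forall>\<^sub>F n in sequentially. \<delta> n < 1" using order_tendstoD(2)[OF dlim, of 1] by simp
    show ?thesis by (intro eventually_conj assms(2) e1 e2 eventually_ge_at_top)
  qed
  have key: "\<forall>\<^sub>F n in sequentially. 0 < \<delta> n \<and> \<delta> n \<le> 1 \<and> t1 n \<le> t2 n \<and> t2 n \<le> card (Kn_edges n) \<and>
      real (t2 n) \<le> \<delta> n / 2 * \<alpha> n * card (Kn_edges n) \<and>
      exp (- \<alpha> n * (real (t2 n) - real (t1 n)) * (\<delta> n)^2 / 32) \<le> b n"
  proof (rule eventually_mono[OF ev])
    fix n assume h: "(t1 n \<in> {1..n choose 2} \<and> t2 n \<in> {1..n choose 2}) \<and> X n \<ge> 2 \<and> n \<ge> 2 \<and> \<delta> n < 1"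
    note pn = per_n[OF assms(3)[rule_format, of n] X_def[of n] _ _ \<delta>_def[of n]]
    show "0 < \<delta> n \<and> \<delta> n \<le> 1 \<and> t1 n \<le> t2 n \<and> t2 n \<le> card (Kn_edges n) \<and>
      real (t2 n) \<le> \<delta> n / 2 * \<alpha> n * card (Kn_edges n) \<and>
      exp (- \<alpha> n * (real (t2 n) - real (t1 n)) * (\<delta> n)^2 / 32) \<le> b n"
      using pn h by (simp add: card_Kn b_def)
  qed
  show ?thesis
  proof (intro conjI impI)
    assume H: "whp (\<lambda>n xs. real (rej P n xs (t2 n)) - real (rej P n xs (t1 n))
                       \<le> \<alpha> n * (real (t2 n) - real (t1 n)))"
    show "\<exists>\<epsilon>. \<epsilon> \<longlonglongrightarrow> 0 \<and> whp (\<lambda>n xs. real (forb P n (proc P n xs (t1 n)))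
                               \<le> (1 + \<epsilon> n) * \<alpha> n * real (n choose 2))"
    proof (intro exI conjI)
      show "\<delta> \<longlonglongrightarrow> 0" by (rule dlim)
      show "whp (\<lambda>n xs. real (forb P n (proc P n xs (t1 n))) \<le> (1 + \<delta> n) * \<alpha> n * real (n choose 2))"
        unfolding whp_def
      proof (rule sandwich1[OF H[unfolded whp_def] blim])
        show "\<And>n. measure_pmf.prob (ordering_pmf n) {xs. real (forb P n (proc P n xs (t1 n))) \<le> (1 + \<delta> n) * \<alpha> n * real (n choose 2)} \<le> 1"
          by (rule measure_pmf.prob_le_1)
        show "\<forall>\<^sub>F n in sequentially.
          measure_pmf.prob (ordering_pmf n) {xs. real (rej P n xs (t2 n)) - real (rej P n xs (t1 n)) \<le> \<alpha> n * (real (t2 n) - real (t1 n))} - b n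
          \<le> measure_pmf.prob (ordering_pmf n) {xs. real (forb P n (proc P n xs (t1 n))) \<le> (1 + \<delta> n) * \<alpha> n * real (n choose 2)}"
        proof (rule eventually_mono[OF key])
          fix n assume h: "0 < \<delta> n \<and> \<delta> n \<le> 1 \<and> t1 n \<le> t2 n \<and> t2 n \<le> card (Kn_edges n) \<and>
            real (t2 n) \<le> \<delta> n / 2 * \<alpha> n * card (Kn_edges n) \<and>
            exp (- \<alpha> n * (real (t2 n) - real (t1 n)) * (\<delta> n)^2 / 32) \<le> b n"
          have seteq: "{xs. \<not> (real (forb P n (proc P n xs (t1 n))) \<le> (1 + \<delta> n) * \<alpha> n * real (n choose 2)) \<and>
                real (rej P n xs (t2 n)) - real (rej P n xs (t1 n)) \<le> \<alpha> n * (real (t2 n) - real (t1 n))}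
            = {xs. real (forb P n (proc P n xs (t1 n))) > (1 + \<delta> n) * \<alpha> n * card (Kn_edges n) \<and>
                real (rej P n xs (t2 n)) - real (rej P n xs (t1 n)) \<le> \<alpha> n * (real (t2 n) - real (t1 n))}"
            by (auto simp: card_Kn)
          have "measure_pmf.prob (ordering_pmf n) {xs. \<not> (real (forb P n (proc P n xs (t1 n))) \<le> (1 + \<delta> n) * \<alpha> n * real (n choose 2)) \<and>
                real (rej P n xs (t2 n)) - real (rej P n xs (t1 n)) \<le> \<alpha> n * (real (t2 n) - real (t1 n))} \<le> b n"
            unfolding seteq by (rule order_trans[OF part1_n[OF adm assms(3)[rule_format, of n]]]) (use h in auto)
          then show "measure_pmf.prob (ordering_pmf n) {xs. real (rej P n xs (t2 n)) - real (rej P n xs (t1 n)) \<le> \<alpha> n * (real (t2 n) - real (t1 n))} - b n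
          \<le> measure_pmf.prob (ordering_pmf n) {xs. real (forb P n (proc P n xs (t1 n))) \<le> (1 + \<delta> n) * \<alpha> n * real (n choose 2)}"
            using prob_lower[of "ordering_pmf n" "\<lambda>xs. real (rej P n xs (t2 n)) - real (rej P n xs (t1 n)) \<le> \<alpha> n * (real (t2 n) - real (t1 n))"
                "\<lambda>xs. real (forb P n (proc P n xs (t1 n))) \<le> (1 + \<delta> n) * \<alpha> n * real (n choose 2)"] by linarith
        qed
      qed
    qed
  next
    assume H: "whp (\<lambda>n xs. real (rej P n xs (t2 n)) - real (rej P n xs (t1 n))
                       \<ge> \<alpha> n * (real (t2 n) - real (t1 n)))"
    show "\<exists>\<epsilon>. \<epsilon> \<longlonglongrightarrow> 0 \<and> whp (\<lambda>n xs. real (forb P n (proc P n xs (t2 n)))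
                               \<ge> (1 + \<epsilon> n) * \<alpha> n * real (n choose 2))"
    proof (intro exI conjI)
      show "(\<lambda>n. - \<delta> n) \<longlonglongrightarrow> 0" using tendsto_minus[OF dlim] by simp
      show "whp (\<lambda>n xs. real (forb P n (proc P n xs (t2 n))) \<ge> (1 + - \<delta> n) * \<alpha> n * real (n choose 2))"
        unfolding whp_def
      proof (rule sandwich1[OF H[unfolded whp_def] blim])
        show "\<And>n. measure_pmf.prob (ordering_pmf n) {xs. real (forb P n (proc P n xs (t2 n))) \<ge> (1 + - \<delta> n) * \<alpha> n * real (n choose 2)} \<le> 1"
          by (rule measure_pmf.prob_le_1)
        show "\<forall>\<^sub>F n in sequentially.
          measure_pmf.prob (ordering_pmf n) {xs. real (rej P n xs (t2 n)) - real (rej P n xs (t1 n)) \<ge> \<alpha> n * (real (t2 n) - real (t1 n))} - b n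
          \<le> measure_pmf.prob (ordering_pmf n) {xs. real (forb P n (proc P n xs (t2 n))) \<ge> (1 + - \<delta> n) * \<alpha> n * real (n choose 2)}"
        proof (rule eventually_mono[OF key])
          fix n assume h: "0 < \<delta> n \<and> \<delta> n \<le> 1 \<and> t1 n \<le> t2 n \<and> t2 n \<le> card (Kn_edges n) \<and>
            real (t2 n) \<le> \<delta> n / 2 * \<alpha> n * card (Kn_edges n) \<and>
            exp (- \<alpha> n * (real (t2 n) - real (t1 n)) * (\<delta> n)^2 / 32) \<le> b n"
          have seteq: "{xs. \<not> (real (forb P n (proc P n xs (t2 n))) \<ge> (1 + - \<delta> n) * \<alpha> n * real (n choose 2)) \<and>
                real (rej P n xs (t2 n)) - real (rej P n xs (t1 n)) \<ge> \<alpha> n * (real (t2 n) - real (t1 n))}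
            = {xs. real (forb P n (proc P n xs (t2 n))) < (1 - \<delta> n) * \<alpha> n * card (Kn_edges n) \<and>
                real (rej P n xs (t2 n)) - real (rej P n xs (t1 n)) \<ge> \<alpha> n * (real (t2 n) - real (t1 n))}"
            by (auto simp: card_Kn)
          have "measure_pmf.prob (ordering_pmf n) {xs. \<not> (real (forb P n (proc P n xs (t2 n))) \<ge> (1 + - \<delta> n) * \<alpha> n * real (n choose 2)) \<and>
                real (rej P n xs (t2 n)) - real (rej P n xs (t1 n)) \<ge> \<alpha> n * (real (t2 n) - real (t1 n))} \<le> b n"
            unfolding seteq by (rule order_trans[OF part2_n[OF adm assms(3)[rule_format, of n]]]) (use h in auto)
          then show "measure_pmf.prob (ordering_pmf n) {xs. real (rej P n xs (t2 n)) - real (rej P n xs (t1 n)) \<ge> \<alpha> n * (real (t2 n) - real (t1 n))} - b n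
          \<le> measure_pmf.prob (ordering_pmf n) {xs. real (forb P n (proc P n xs (t2 n))) \<ge> (1 + - \<delta> n) * \<alpha> n * real (n choose 2)}"
            using prob_lower[of "ordering_pmf n" "\<lambda>xs. real (rej P n xs (t2 n)) - real (rej P n xs (t1 n)) \<ge> \<alpha> n * (real (t2 n) - real (t1 n))"
                "\<lambda>xs. real (forb P n (proc P n xs (t2 n))) \<ge> (1 + - \<delta> n) * \<alpha> n * real (n choose 2)"] by linarith
        qed
      qed
    qed
  qed
qed


end
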